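(* Let $R$ be as in the standing setup. If the $m$-adic filtration of $R$ satisfies the BF condition, then it is essentially divisible.
   Context: Standing setup: $k$ is a field and $R$ is a complete local domain with $k\subseteq R\subseteq k[[t]]$, residue field $k$, maximal ideal $m$, and nonzero conductor $(R:k[[t]])\neq 0$. Let $v$ be the $t$-adic valuation, $S=v(R)=\{v(r): r\in R, r\neq 0\}$, $e$ the smallest positive element of $S$, and $w_j$ the smallest element of $S$ congruent to $j\pmod e$ ($j=0,\dots,e-1$). For a nonzero ideal $I$, $v(I)=\{v(a): a\in I, a\ne0\}$; $m^0=R$. For $a\in R$, $\operatorname{ord}(a)=\max\{i: a\in m^i\}$; for $s\in S$, $\operatorname{vord}(s)=\max\{i: s\in v(m^i)\}$. A minimal reduction of $m$ is $xR$ with $v(x)=e$. The $m$-adic filtration is essentially divisible with respect to $xR$ if for every $u\in v(xR)$ there is $a\in xR$ with $v(a)=u$ and $\operatorname{ord}(a)=\operatorname{vord}(u)$; it is essentially divisible if this holds for some $x$ with $v(x)=e$. The $m$-adic filtration satisfies the BF condition if there exist $x\in R$ with $v(x)=e$ and $f_0,\ldots,f_{e-1}\in R$ with $v(f_j)=w_j$ such that for every $i\ge0$, $m^i$ is a free $k[[x]]$-module with a basis of the form $x^{h_0}f_0,\ldots,x^{h_{e-1}}f_{e-1}$ for some nonnegative integers $h_j$ (depending on $i$). *)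

theory Defs
  imports "HOL-Computational_Algebra.Formal_Power_Series"
begin

text \<open>Setting: k is the field type 'a, k[[t]] is the type 'a fps, R is a set of power series.
  The t-adic valuation v is subdegree.\<close>

definition subring_containing_k :: "'a::field fps set \<Rightarrow> bool" where
  "subring_containing_k R \<longleftrightarrow> (\<forall>c. fps_const c \<in> R) \<and>
     (\<forall>a\<in>R. \<forall>b\<in>R. a + b \<in> R \<and> a - b \<in> R \<and> a * b \<in> R)"

definition maxid :: "'a::field fps set \<Rightarrow> 'a fps set" where
  "maxid R = {r \<in> R. fps_nth r 0 = 0}"

inductive_set addclose :: "'a::field fps set \<Rightarrow> 'a fps set" for A where
  zero: "0 \<in> addclose A"
| base: "a \<in> A \<Longrightarrow> a \<in> addclose A"
| add: "a \<in> addclose A \<Longrightarrow> b \<in> addclose A \<Longrightarrow> a + b \<in> addclose A"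

fun mpow :: "'a::field fps set \<Rightarrow> nat \<Rightarrow> 'a fps set" where
  "mpow R 0 = R"
| "mpow R (Suc i) = addclose {a * b | a b. a \<in> mpow R i \<and> b \<in> maxid R}"

definition local_with_maxid :: "'a::field fps set \<Rightarrow> bool" where
  "local_with_maxid R \<longleftrightarrow> (\<forall>r\<in>R. fps_nth r 0 \<noteq> 0 \<longrightarrow> inverse r \<in> R)"

definition madic_complete :: "'a::field fps set \<Rightarrow> bool" where
  "madic_complete R \<longleftrightarrow> (\<forall>a :: nat \<Rightarrow> 'a fps. (\<forall>n. a n \<in> R) \<and> (\<forall>n. a (Suc n) - a n \<in> mpow R n)
       \<longrightarrow> (\<exists>l\<in>R. \<forall>n. l - a n \<in> mpow R n))"

definition conductor :: "'a::field fps set \<Rightarrow> 'a fps set" where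
  "conductor R = {z. \<forall>y. z * y \<in> R}"

definition vset :: "'a::field fps set \<Rightarrow> nat set" where
  "vset I = {subdegree a | a. a \<in> I \<and> a \<noteq> 0}"

definition semigroup_S :: "'a::field fps set \<Rightarrow> nat set" where
  "semigroup_S R = vset R"

definition mult_e :: "'a::field fps set \<Rightarrow> nat" where
  "mult_e R = (LEAST s. s \<in> semigroup_S R \<and> 0 < s)"

definition apery_w :: "'a::field fps set \<Rightarrow> nat \<Rightarrow> nat" where
  "apery_w R j = (LEAST s. s \<in> semigroup_S R \<and> s mod mult_e R = j)"

definition ord_m :: "'a::field fps set \<Rightarrow> 'a fps \<Rightarrow> nat" where
  "ord_m R a = (GREATEST i. a \<in> mpow R i)"

definition vord :: "'a::field fps set \<Rightarrow> nat \<Rightarrow> nat" where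
  "vord R s = (GREATEST i. s \<in> vset (mpow R i))"

definition principal :: "'a::field fps set \<Rightarrow> 'a fps \<Rightarrow> 'a fps set" where
  "principal R x = {x * r | r. r \<in> R}"

definition ess_div_wrt :: "'a::field fps set \<Rightarrow> 'a fps \<Rightarrow> bool" where
  "ess_div_wrt R x \<longleftrightarrow> (\<forall>u \<in> vset (principal R x).
      \<exists>a \<in> principal R x. a \<noteq> 0 \<and> subdegree a = u \<and> ord_m R a = vord R u)"

definition ess_div :: "'a::field fps set \<Rightarrow> bool" where
  "ess_div R \<longleftrightarrow> (\<exists>x\<in>R. x \<noteq> 0 \<and> subdegree x = mult_e R \<and> ess_div_wrt R x)"

text \<open>k[[x]]-linear combination  sum_j g_j(x) * b_j  (g_j(x) = g_j oo x).\<close>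
definition kx_comb :: "'a::field fps \<Rightarrow> nat \<Rightarrow> (nat \<Rightarrow> 'a fps) \<Rightarrow> (nat \<Rightarrow> 'a fps) \<Rightarrow> 'a fps" where
  "kx_comb x n b g = (\<Sum>j<n. (g j oo x) * b j)"

definition free_kx_basis :: "'a::field fps \<Rightarrow> nat \<Rightarrow> 'a fps set \<Rightarrow> (nat \<Rightarrow> 'a fps) \<Rightarrow> bool" where
  "free_kx_basis x n M b \<longleftrightarrow>
     M = {kx_comb x n b g | g. True} \<and>
     (\<forall>g. kx_comb x n b g = 0 \<longrightarrow> (\<forall>j<n. g j = 0))"

definition BF_condition :: "'a::field fps set \<Rightarrow> bool" where
  "BF_condition R \<longleftrightarrow> (\<exists>x\<in>R. x \<noteq> 0 \<and> subdegree x = mult_e R \<and>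
     (\<exists>f :: nat \<Rightarrow> 'a fps. (\<forall>j<mult_e R. f j \<in> R \<and> f j \<noteq> 0 \<and> subdegree (f j) = apery_w R j) \<and>
        (\<forall>i. \<exists>h :: nat \<Rightarrow> nat. free_kx_basis x (mult_e R) (mpow R i) (\<lambda>j. x ^ h j * f j))))"

end

theory Submission
  imports Defs
begin

lemma addclose_mono: "A \<subseteq> B \<Longrightarrow> addclose A \<subseteq> addclose B"
proof
  fix a assume AB: "A \<subseteq> B" and "a \<in> addclose A"
  from \<open>a \<in> addclose A\<close> show "a \<in> addclose B"
    by (induction rule: addclose.induct) (use AB in \<open>auto intro: addclose.intros\<close>)
qed

lemma mpow_Suc_sub:
  assumes "subring_containing_k R"
  shows "mpow R (Suc n) \<subseteq> mpow R n"
proof (induction n)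
  case 0
  have zR: "0 \<in> R" using assms unfolding subring_containing_k_def
    by (metis fps_const_0_eq_0)
  show ?case
  proof
    fix a assume "a \<in> mpow R (Suc 0)"
    then have "a \<in> addclose {a * b |a b. a \<in> R \<and> b \<in> maxid R}" by simp
    then show "a \<in> mpow R 0"
    proof (induction rule: addclose.induct)
      case zero then show ?case using zR by simp
    next
      case (base c)
      then obtain a b where "c = a * b" "a \<in> R" "b \<in> R" unfolding maxid_def by blast
      then show ?case using assms unfolding subring_containing_k_def by simp
    next
      case (add a b)
      then show ?case using assms unfolding subring_containing_k_def by simp
    qed
  qed
next
  case (Suc n)
  have "{a * b |a b. a \<in> mpow R (Suc n) \<and> b \<in> maxid R} \<subseteq> {a * b |a b. a \<in> mpow R n \<and> b \<in> maxid R}"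
    using Suc by blast
  then show ?case by (simp add: addclose_mono)
qed

lemma mpow_antimono:
  assumes "subring_containing_k R" "m \<le> n"
  shows "mpow R n \<subseteq> mpow R m"
  using lift_Suc_antimono_le[of "mpow R", OF mpow_Suc_sub[OF assms(1)] assms(2)] .

lemma mpow_subdeg:
  "a \<in> mpow R i \<Longrightarrow> a \<noteq> 0 \<Longrightarrow> i \<le> subdegree a"
proof (induction i arbitrary: a)
  case 0 then show ?case by simp
next
  case (Suc i)
  have "a \<in> addclose {a * b |a b. a \<in> mpow R i \<and> b \<in> maxid R}" using Suc by simp
  then have "a = 0 \<or> Suc i \<le> subdegree a"
  proof (induction rule: addclose.induct)
    case zero then show ?case by simp
  next
    case (base c)
    then obtain a b where ab: "c = a * b" "a \<in> mpow R i" "b \<in> maxid R" by blast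
    show ?case
    proof (cases "c = 0")
      case False
      then have "a \<noteq> 0" "b \<noteq> 0" using ab by auto
      then have "i \<le> subdegree a" using Suc.IH ab by blast
      moreover have "fps_nth b 0 = 0" using ab unfolding maxid_def by blast
      then have "subdegree b \<noteq> 0" using \<open>b \<noteq> 0\<close> subdegree_eq_0_iff by blast
      moreover have "subdegree c = subdegree a + subdegree b"
        using ab \<open>a \<noteq> 0\<close> \<open>b \<noteq> 0\<close> subdegree_mult by blast
      ultimately show ?thesis by linarith
    qed simp
  next
    case (add a b)
    show ?case
    proof (cases "a + b = 0")
      case False
      show ?thesis
      proof (cases "a = 0")
        case True then show ?thesis using add by simp
      next
        case a: False
        show ?thesis
        proof (cases "b = 0")
          case True then show ?thesis using add by simp
        next
          case b: False
          have "min (subdegree a) (subdegree b) \<le> subdegree (a + b)"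
            using subdegree_add_ge'[OF False] .
          moreover have "Suc i \<le> subdegree a" "Suc i \<le> subdegree b" using add a b by auto
          ultimately show ?thesis by linarith
        qed
      qed
    qed simp
  qed
  then show ?case using Suc by simp
qed

lemma term_subdeg:
  fixes x p c :: "'a::field fps"
  assumes "fps_nth x 0 = 0" "x \<noteq> 0" "p \<noteq> 0" "c \<noteq> 0"
  shows "(p oo x) * (x^h * c) \<noteq> 0 \<and>
         subdegree ((p oo x) * (x^h * c)) = subdegree x * (subdegree p + h) + subdegree c"
proof -
  have px: "p oo x \<noteq> 0" using fps_compose_eq_0_iff[OF assms(1)] assms by auto
  have xh: "x ^ h \<noteq> 0" using assms(2) by simp
  have xhc: "x ^ h * c \<noteq> 0" using xh assms(4) by simp
  have s1: "subdegree (x ^ h * c) = subdegree x * h + subdegree c"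
    using xh assms(4) by (simp add: subdegree_mult subdegree_power)
  have s2: "subdegree (p oo x) = subdegree p * subdegree x"
    using subdegree_fps_compose[OF assms(1)] by blast
  have "subdegree ((p oo x) * (x^h * c)) = subdegree (p oo x) + subdegree (x ^ h * c)"
    using px xhc by (rule subdegree_mult)
  also have "\<dots> = subdegree x * (subdegree p + h) + subdegree c"
    using s1 s2 by (simp add: algebra_simps)
  finally show ?thesis using px xhc by simp
qed

lemma sum_subdeg_min:
  fixes T :: "nat \<Rightarrow> 'a::field fps"
  assumes inj: "\<And>i j. i<n \<Longrightarrow> j<n \<Longrightarrow> T i \<noteq> 0 \<Longrightarrow> T j \<noteq> 0 \<Longrightarrow> subdegree (T i) = subdegree (T j) \<Longrightarrow> i = j"
  and nz: "(\<Sum>j<n. T j) \<noteq> 0"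
  shows "\<exists>J<n. T J \<noteq> 0 \<and> subdegree (\<Sum>j<n. T j) = subdegree (T J)"
proof -
  have "\<exists>j. j < n \<and> T j \<noteq> 0"
  proof (rule ccontr)
    assume "\<not> ?thesis"
    then have "(\<Sum>j<n. T j) = 0" by (intro sum.neutral) auto
    with nz show False by simp
  qed
  then obtain j0 where "j0 < n \<and> T j0 \<noteq> 0" by blast
  from ex_has_least_nat[of "\<lambda>j. j < n \<and> T j \<noteq> 0", OF this, of "\<lambda>j. subdegree (T j)"]
  obtain J where J: "J < n" "T J \<noteq> 0"
    and min: "\<And>j. j < n \<Longrightarrow> T j \<noteq> 0 \<Longrightarrow> subdegree (T J) \<le> subdegree (T j)" by blast
  define d where "d = subdegree (T J)"
  have other: "fps_nth (T j) d = 0" if "j < n" "j \<noteq> J" for j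
  proof (cases "T j = 0")
    case False
    then have "subdegree (T J) \<le> subdegree (T j)" using min that by blast
    moreover have "subdegree (T J) \<noteq> subdegree (T j)" using inj[OF J(1) that(1) J(2) False] that by auto
    ultimately show ?thesis unfolding d_def by (intro nth_less_subdegree_zero) simp
  qed simp
  have low: "fps_nth (T j) i = 0" if "i < d" "j < n" for i j
  proof (cases "T j = 0")
    case False
    then show ?thesis using min[OF that(2) False] that(1) unfolding d_def
      by (intro nth_less_subdegree_zero) simp
  qed simp
  have "fps_nth (\<Sum>j<n. T j) d = (\<Sum>j<n. fps_nth (T j) d)" by (simp add: fps_sum_nth)
  also have "\<dots> = fps_nth (T J) d + (\<Sum>j\<in>{..<n} - {J}. fps_nth (T j) d)"
    using J by (simp add: sum.remove)
  also have "(\<Sum>j\<in>{..<n} - {J}. fps_nth (T j) d) = 0" using other by (intro sum.neutral) auto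
  finally have "fps_nth (\<Sum>j<n. T j) d \<noteq> 0" using J unfolding d_def by simp
  moreover have "fps_nth (\<Sum>j<n. T j) i = 0" if "i < d" for i
    using low that by (simp add: fps_sum_nth)
  ultimately have "subdegree (\<Sum>j<n. T j) = d" by (intro subdegreeI)
  then show ?thesis using J unfolding d_def by blast
qed

lemma kx_comb_single:
  assumes "J < n"
  shows "kx_comb x n b (\<lambda>j. if j = J then q else 0) = (q oo x) * b J"
proof -
  have "kx_comb x n b (\<lambda>j. if j = J then q else 0) = (\<Sum>j<n. if j = J then (q oo x) * b j else 0)"
    unfolding kx_comb_def by (intro sum.cong) auto
  also have "\<dots> = (q oo x) * b J" using assms by simp
  finally show ?thesis .
qed


theorem proposition1p4:
  fixes R :: "'a::field fps set"
  assumes "subring_containing_k R"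
    and "local_with_maxid R"
    and "madic_complete R"
    and "conductor R \<noteq> {0}"
    and "BF_condition R"
  shows "ess_div R"
proof -
  note sub = assms(1)
  define e where "e = mult_e R"
  define w where "w = apery_w R"
  have Smem: "s \<in> semigroup_S R \<longleftrightarrow> (\<exists>a. s = subdegree a \<and> a \<in> R \<and> a \<noteq> 0)" for s
    unfolding semigroup_S_def vset_def by blast
  have zR: "0 \<in> R" using sub unfolding subring_containing_k_def by (metis fps_const_0_eq_0)
  have Rmul: "a * b \<in> R" if "a \<in> R" "b \<in> R" for a b
    using sub that unfolding subring_containing_k_def by blast
  obtain x f where xR: "x \<in> R" and xnz: "x \<noteq> 0" and sx: "subdegree x = e"
    and fprops: "\<And>j. j < e \<Longrightarrow> f j \<in> R \<and> f j \<noteq> 0 \<and> subdegree (f j) = w j"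
    and ex: "\<forall>i. \<exists>h :: nat \<Rightarrow> nat. free_kx_basis x e (mpow R i) (\<lambda>j. x ^ h j * f j)"
    using assms(5) unfolding BF_condition_def e_def w_def by blast
  from ex obtain H where basis: "\<And>i. free_kx_basis x e (mpow R i) (\<lambda>j. x ^ H i j * f j)"
    by metis
  have "0 \<in> conductor R" unfolding conductor_def using zR by simp
  then obtain z where zc: "z \<in> conductor R" and znz: "z \<noteq> 0" using assms(4) by blast
  have zX: "z * fps_X ^ n \<in> R \<and> z * fps_X ^ n \<noteq> 0 \<and> subdegree (z * fps_X ^ n) = subdegree z + n" for n
    using zc znz unfolding conductor_def by simp
  have "\<exists>s. s \<in> semigroup_S R \<and> 0 < s"
    using zX[of 1] Smem by fastforce
  then have "mult_e R \<in> semigroup_S R \<and> 0 < mult_e R"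
    unfolding mult_e_def by (rule LeastI_ex)
  then have epos: "0 < e" unfolding e_def by blast
  have apery: "w j \<in> semigroup_S R \<and> w j mod e = j \<and> (\<forall>s\<in>semigroup_S R. s mod e = j \<longrightarrow> w j \<le> s)"
    if "j < e" for j
  proof -
    define sz where "sz = subdegree z"
    define n where "n = e - sz mod e + j"
    have "sz mod e < e" using epos by simp
    then have "sz + n = e * (sz div e + 1) + j"
    proof -
      have "sz = e * (sz div e) + sz mod e" by simp
      moreover have "e * (sz div e + 1) = e * (sz div e) + e" by simp
      ultimately show ?thesis unfolding n_def using \<open>sz mod e < e\<close> by linarith
    qed
    then have "(sz + n) mod e = (j + e * (sz div e + 1)) mod e" by (simp only: add.commute)
    also have "\<dots> = j mod e" by (rule mod_mult_self2)
    also have "\<dots> = j" using that by (rule mod_less)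
    finally have "(sz + n) mod e = j" .
    moreover have "sz + n \<in> semigroup_S R" using zX[of n] Smem unfolding sz_def by metis
    ultimately have ex: "\<exists>s. s \<in> semigroup_S R \<and> s mod e = j" by blast
    have "w j \<in> semigroup_S R \<and> w j mod e = j"
      unfolding w_def apery_w_def e_def[symmetric] by (rule LeastI_ex[OF ex])
    moreover have "\<forall>s\<in>semigroup_S R. s mod e = j \<longrightarrow> w j \<le> s"
      unfolding w_def apery_w_def e_def[symmetric] by (auto intro: Least_le)
    ultimately show ?thesis by blast
  qed
  have x0: "fps_nth x 0 = 0" using sx epos by (intro nth_less_subdegree_zero) simp
  have Tdeg: "(g oo x) * (x ^ h * f j) \<noteq> 0 \<and>
       subdegree ((g oo x) * (x ^ h * f j)) = e * (subdegree g + h) + w j"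
    if "j < e" "g \<noteq> 0" for g h j
    using term_subdeg[OF x0 xnz that(2), of "f j" h] fprops[OF that(1)] sx by simp
  have Tmod: "(e * k + w j) mod e = j" if "j < e" for k j
    using apery[OF that] by simp
  have decomp: "\<exists>J<e. \<exists>g. g \<noteq> 0 \<and> (g oo x) * (x ^ H i J * f J) \<in> mpow R i \<and>
       subdegree b = e * (subdegree g + H i J) + w J"
    if bm: "b \<in> mpow R i" and bnz: "b \<noteq> 0" for i b
  proof -
    define B where "B = (\<lambda>j. x ^ H i j * f j)"
    have mB: "mpow R i = {kx_comb x e B g | g. True}"
      using basis[of i] unfolding free_kx_basis_def B_def by (elim conjE)
    from bm obtain g where bg: "b = kx_comb x e B g"
      unfolding mB by blast
    define T where "T = (\<lambda>j. (g j oo x) * B j)"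
    have Tnz: "g j \<noteq> 0" if "T j \<noteq> 0" for j
    proof
      assume "g j = 0"
      then have "T j = 0" unfolding T_def by simp
      with that show False by contradiction
    qed
    have Tsd: "subdegree (T j) mod e = j" if "j < e" "T j \<noteq> 0" for j
    proof -
      have "subdegree (T j) = e * (subdegree (g j) + H i j) + w j"
        using Tdeg[OF that(1) Tnz[OF that(2)], of "H i j"] unfolding T_def B_def by (elim conjE)
      then show ?thesis using Tmod[OF that(1)] by simp
    qed
    have bs: "b = (\<Sum>j<e. T j)" using bg unfolding kx_comb_def T_def .
    have "\<exists>J<e. T J \<noteq> 0 \<and> subdegree (\<Sum>j<e. T j) = subdegree (T J)"
    proof (rule sum_subdeg_min)
      show "i' = j" if "i' < e" "j < e" "T i' \<noteq> 0" "T j \<noteq> 0" "subdegree (T i') = subdegree (T j)" for i' j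
        using Tsd[OF that(1,3)] Tsd[OF that(2,4)] that(5) by metis
      show "(\<Sum>j<e. T j) \<noteq> 0" using bnz unfolding bs .
    qed
    then obtain J where J: "J < e" "T J \<noteq> 0" "subdegree b = subdegree (T J)"
      using bs by blast
    have gJ: "g J \<noteq> 0" using Tnz J(2) by blast
    have "kx_comb x e B (\<lambda>j. if j = J then g J else 0) = T J"
      using kx_comb_single[OF J(1), of x B "g J"] unfolding T_def by simp
    then have "\<exists>g'. T J = kx_comb x e B g' \<and> True" by (intro exI[of _ "\<lambda>j. if j = J then g J else 0"]) simp
    then have TJm: "T J \<in> mpow R i" unfolding mB by (rule CollectI)
    have "subdegree (T J) = e * (subdegree (g J) + H i J) + w J"
      using Tdeg[OF J(1) gJ, of "H i J"] unfolding T_def B_def by (elim conjE)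
    then have "subdegree b = e * (subdegree (g J) + H i J) + w J" using J(3) by simp
    moreover have "(g J oo x) * (x ^ H i J * f J) \<in> mpow R i" using TJm unfolding T_def B_def .
    ultimately show ?thesis using J(1) gJ by blast
  qed
  have H0: "H 0 J = 0" if "J < e" for J
  proof -
    have fJ: "f J \<in> R" "f J \<noteq> 0" "subdegree (f J) = w J" using fprops[OF that] by blast+
    have "f J \<in> mpow R 0" unfolding mpow.simps(1) by (rule fJ(1))
    from decomp[OF this fJ(2)] obtain J' and g :: "'a fps" where J': "J' < e" "g \<noteq> 0"
      "subdegree (f J) = e * (subdegree g + H 0 J') + w J'" by blast
    have wJ: "w J = e * (subdegree g + H 0 J') + w J'" using trans[OF sym[OF fJ(3)] J'(3)] .
    have "w J mod e = J'" by (subst wJ) (rule Tmod[OF J'(1)])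
    moreover have "w J mod e = J" using apery[OF that] by blast
    ultimately have JJ: "J' = J" by simp
    from wJ JJ have "e * (subdegree g + H 0 J') = 0" by simp
    then show ?thesis using epos JJ by simp
  qed
  have Rcont: "(q oo x) * f J \<in> R" if "J < e" for q J
  proof -
    have mB: "mpow R 0 = {kx_comb x e (\<lambda>j. x ^ H 0 j * f j) g | g. True}"
      using basis[of 0] unfolding free_kx_basis_def by (elim conjE)
    have "kx_comb x e (\<lambda>j. x ^ H 0 j * f j) (\<lambda>j. if j = J then q else 0) = (q oo x) * (x ^ H 0 J * f J)"
      by (rule kx_comb_single[OF that])
    also have "x ^ H 0 J * f J = f J" using H0[OF that] by simp
    finally have "\<exists>g'. (q oo x) * f J = kx_comb x e (\<lambda>j. x ^ H 0 j * f j) g' \<and> True"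
      by (intro exI[of _ "\<lambda>j. if j = J then q else 0"]) simp
    then have "(q oo x) * f J \<in> mpow R 0" unfolding mB by (rule CollectI)
    then show ?thesis by simp
  qed
  have "ess_div_wrt R x"
    unfolding ess_div_wrt_def
  proof
    fix u assume "u \<in> vset (principal R x)"
    then obtain r where r: "r \<in> R" "x * r \<noteq> 0" "u = subdegree (x * r)"
      unfolding vset_def principal_def by blast
    have rnz: "r \<noteq> 0" using r by auto
    have u: "u = e + subdegree r" using r rnz xnz sx by simp
    have srS: "subdegree r \<in> semigroup_S R" using Smem r rnz by blast
    define P where "P = (\<lambda>i. u \<in> vset (mpow R i))"
    have P0: "P 0" unfolding P_def vset_def mpow.simps(1) using r Rmul[OF xR r(1)] by blast
    have Pb: "i \<le> u" if "P i" for i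
      using that mpow_subdeg unfolding P_def vset_def by blast
    define i0 where "i0 = vord R u"
    have i0G: "i0 = Greatest P" unfolding i0_def vord_def P_def by simp
    have Pi0: "P i0" unfolding i0G by (rule GreatestI_nat[of P 0 u, OF P0 Pb])
    have nPS: "\<not> P (Suc i0)"
    proof
      assume "P (Suc i0)"
      then have "Suc i0 \<le> i0" unfolding i0G by (rule Greatest_le_nat[of P _ u, OF _ Pb])
      then show False by simp
    qed
    from Pi0 obtain b where b: "b \<in> mpow R i0" "b \<noteq> 0" "subdegree b = u"
      unfolding P_def vset_def by blast
    from decomp[OF b(1,2)] obtain J g where J: "J < e" "g \<noteq> 0"
      "(g oo x) * (x ^ H i0 J * f J) \<in> mpow R i0"
      "subdegree b = e * (subdegree g + H i0 J) + w J" by blast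
    define h where "h = H i0 J"
    define a where "a = (g oo x) * (x ^ h * f J)"
    have a_m: "a \<in> mpow R i0" using J unfolding a_def h_def by simp
    have anz: "a \<noteq> 0" and sa: "subdegree a = u"
      using Tdeg[OF J(1,2), of h] J(4) b(3) unfolding a_def h_def by auto
    have umod: "u mod e = J" using J(4) b(3) Tmod[OF J(1)] by simp
    then have "subdegree r mod e = J" using u by simp
    then have "w J \<le> subdegree r" using apery[OF J(1)] srS by blast
    then have hg: "1 \<le> subdegree g + h"
      using J(4) b(3) u epos unfolding h_def by (cases "subdegree g + H i0 J") auto
    define G where "G = g * fps_X ^ h"
    have Gnz: "G \<noteq> 0" using J(2) unfolding G_def by simp
    have sG: "1 \<le> subdegree G" using hg J(2) unfolding G_def by simp
    have Gc: "G oo x = (g oo x) * x ^ h"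
      unfolding G_def by (simp add: fps_compose_mult_distrib[OF x0] fps_compose_power[OF x0, symmetric]
          fps_X_fps_compose_startby0[OF x0])
    have "G = fps_shift 1 G * fps_X" using fps_shift_times_fps_X[OF sG] by simp
    then have "G oo x = (fps_shift 1 G oo x) * (fps_X oo x)"
      by (metis fps_compose_mult_distrib[OF x0])
    then have "G oo x = (fps_shift 1 G oo x) * x" using x0 by simp
    then have aeq: "a = x * ((fps_shift 1 G oo x) * f J)"
      using Gc unfolding a_def by (simp add: algebra_simps)
    have "a \<in> principal R x"
      unfolding principal_def using aeq Rcont[OF J(1)] by blast
    moreover have "ord_m R a = vord R u"
      unfolding ord_m_def i0_def[symmetric]
    proof (rule Greatest_equality)
      show "a \<in> mpow R i0" by (rule a_m)
      show "y \<le> i0" if "a \<in> mpow R y" for y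
      proof (rule ccontr)
        assume "\<not> y \<le> i0"
        then have "a \<in> mpow R (Suc i0)" using mpow_antimono[OF sub, of "Suc i0" y] that by auto
        then have "P (Suc i0)" unfolding P_def vset_def using anz sa by blast
        with nPS show False by simp
      qed
    qed
    ultimately show "\<exists>a\<in>principal R x. a \<noteq> 0 \<and> subdegree a = u \<and> ord_m R a = vord R u"
      using anz sa by blast
  qed
  then show ?thesis unfolding ess_div_def e_def[symmetric] using xR xnz sx by blast
qed

end
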